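(* A regular Hausdorff space $X$ is a Nagata space if and only if $\mathcal{F}(X)$ is a Nagata space.
   Context: $\mathcal{F}(X)$ is the set of nonempty finite subsets of $X$ with the Vietoris topology (base: $\langle U_1,\dots,U_k\rangle=\{A: A\subset\bigcup_i U_i,\ A\cap U_j\neq\emptyset\ \forall j\}$, $U_i$ open in $X$). A space $Y$ is a Nagata space if for each $x\in Y$ there are sequences $\{U_n(x)\}_{n\in\mathbb{N}}$ and $\{V_n(x)\}_{n\in\mathbb{N}}$ of open neighborhoods of $x$ such that (i) $\{U_n(x)\}$ is a local base at $x$ with $U_{n+1}(x)\subset U_n(x)$, and (ii) if $y\notin U_n(x)$ then $V_n(x)\cap V_n(y)=\emptyset$. *)

theory Defs
  imports "HOL-Analysis.Analysis"
begin

definition vietoris_fin_base :: "'a topology \<Rightarrow> 'a set set set" where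
  "vietoris_fin_base X =
     {{A. A \<noteq> {} \<and> finite A \<and> A \<subseteq> \<Union>\<U> \<and> (\<forall>U\<in>\<U>. A \<inter> U \<noteq> {})} | \<U>.
        finite \<U> \<and> \<U> \<noteq> {} \<and> (\<forall>U\<in>\<U>. openin X U)}"

definition fin_vietoris :: "'a topology \<Rightarrow> 'a set topology" where
  "fin_vietoris X = topology_generated_by (vietoris_fin_base X)"

definition nagata_space :: "'a topology \<Rightarrow> bool" where
  "nagata_space Y \<longleftrightarrow>
     (\<exists>U V :: 'a \<Rightarrow> nat \<Rightarrow> 'a set. \<forall>x\<in>topspace Y.
        (\<forall>n. openin Y (U x n) \<and> x \<in> U x n \<and> openin Y (V x n) \<and> x \<in> V x n) \<and>
        (\<forall>n. U x (Suc n) \<subseteq> U x n) \<and>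
        (\<forall>W. openin Y W \<and> x \<in> W \<longrightarrow> (\<exists>n. U x n \<subseteq> W)) \<and>
        (\<forall>n. \<forall>y\<in>topspace Y. y \<notin> U x n \<longrightarrow> V x n \<inter> V y n = {}))"

end

theory Submission
  imports Defs
begin

definition vbox :: "'a set set \<Rightarrow> 'a set set" where
  "vbox \<U> = {A. A \<noteq> {} \<and> finite A \<and> A \<subseteq> \<Union>\<U> \<and> (\<forall>U\<in>\<U>. A \<inter> U \<noteq> {})}"

lemma topspace_fv:
  "topspace (fin_vietoris X) = {A. A \<noteq> {} \<and> finite A \<and> A \<subseteq> topspace X}"
proof -
  have "\<Union>(vietoris_fin_base X) = {A. A \<noteq> {} \<and> finite A \<and> A \<subseteq> topspace X}"
  proof
    show "\<Union>(vietoris_fin_base X) \<subseteq> {A. A \<noteq> {} \<and> finite A \<and> A \<subseteq> topspace X}"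
    proof
      fix A assume "A \<in> \<Union>(vietoris_fin_base X)"
      then obtain \<U> where U: "\<forall>U\<in>\<U>. openin X U" and A: "A \<noteq> {}" "finite A" "A \<subseteq> \<Union>\<U>"
        unfolding vietoris_fin_base_def by blast
      have "\<Union>\<U> \<subseteq> topspace X" using U openin_subset by blast
      then show "A \<in> {A. A \<noteq> {} \<and> finite A \<and> A \<subseteq> topspace X}" using A by blast
    qed
  next
    show "{A. A \<noteq> {} \<and> finite A \<and> A \<subseteq> topspace X} \<subseteq> \<Union>(vietoris_fin_base X)"
    proof
      fix A assume A: "A \<in> {A. A \<noteq> {} \<and> finite A \<and> A \<subseteq> topspace X}"
      have "A \<in> {A. A \<noteq> {} \<and> finite A \<and> A \<subseteq> \<Union>{topspace X} \<and> (\<forall>U\<in>{topspace X}. A \<inter> U \<noteq> {})}"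
        using A by auto
      moreover have "{A. A \<noteq> {} \<and> finite A \<and> A \<subseteq> \<Union>{topspace X} \<and> (\<forall>U\<in>{topspace X}. A \<inter> U \<noteq> {})}
          \<in> vietoris_fin_base X"
        unfolding vietoris_fin_base_def by blast
      ultimately show "A \<in> \<Union>(vietoris_fin_base X)" by blast
    qed
  qed
  then show ?thesis unfolding fin_vietoris_def by simp
qed

lemma base_open:
  assumes "finite \<U>" "\<U> \<noteq> {}" "\<And>U. U \<in> \<U> \<Longrightarrow> openin X U"
  shows "openin (fin_vietoris X) (vbox \<U>)"
proof -
  have "vbox \<U> \<in> vietoris_fin_base X"
    unfolding vietoris_fin_base_def vbox_def using assms by blast
  then show ?thesis unfolding fin_vietoris_def by (rule topology_generated_by_Basis)
qed

lemma sing_open: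
  assumes "openin (fin_vietoris X) W"
  shows "openin X {y \<in> topspace X. {y} \<in> W}"
proof -
  have "generate_topology_on (vietoris_fin_base X) W"
    using assms unfolding fin_vietoris_def by (rule openin_topology_generated_by)
  then show ?thesis
  proof (induction rule: generate_topology_on.induct)
    case Empty
    then show ?case by simp
  next
    case (Int a b)
    have "{y \<in> topspace X. {y} \<in> a \<inter> b} = {y \<in> topspace X. {y} \<in> a} \<inter> {y \<in> topspace X. {y} \<in> b}"
      by auto
    then show ?case using Int by auto
  next
    case (UN K)
    have "{y \<in> topspace X. {y} \<in> \<Union>K} = (\<Union>k\<in>K. {y \<in> topspace X. {y} \<in> k})" by auto
    then show ?case using UN by auto
  next
    case (Basis s)
    then obtain \<U> where U: "finite \<U>" "\<U> \<noteq> {}" "\<forall>U\<in>\<U>. openin X U"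
      and s: "s = {A. A \<noteq> {} \<and> finite A \<and> A \<subseteq> \<Union>\<U> \<and> (\<forall>U\<in>\<U>. A \<inter> U \<noteq> {})}"
      unfolding vietoris_fin_base_def by blast
    have "{y \<in> topspace X. {y} \<in> s} = topspace X \<inter> \<Inter>\<U>"
      using U(2) unfolding s by auto
    moreover have "openin X (topspace X \<inter> \<Inter>\<U>)"
      using U by (intro openin_Int openin_Inter) auto
    ultimately show ?case by simp
  qed
qed

lemma local_base_F:
  fixes U :: "'a \<Rightarrow> nat \<Rightarrow> 'a set"
  assumes dec: "\<And>x n. x \<in> topspace X \<Longrightarrow> U x (Suc n) \<subseteq> U x n"
    and lb: "\<And>x W. x \<in> topspace X \<Longrightarrow> openin X W \<Longrightarrow> x \<in> W \<Longrightarrow> \<exists>n. U x n \<subseteq> W"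
    and W: "openin (fin_vietoris X) W"
  shows "\<forall>A\<in>W. A \<in> topspace (fin_vietoris X) \<longrightarrow> (\<exists>n. vbox ((\<lambda>a. U a n) ` A) \<subseteq> W)"
proof -
  have mono: "U x m \<subseteq> U x n" if "x \<in> topspace X" "n \<le> m" for x n m
    using lift_Suc_antimono_le[of "U x", OF dec[OF that(1)] that(2)] .
  have vmono: "vbox ((\<lambda>a. U a m) ` A) \<subseteq> vbox ((\<lambda>a. U a n) ` A)"
    if "A \<subseteq> topspace X" "n \<le> m" for A n m
  proof
    fix B assume "B \<in> vbox ((\<lambda>a. U a m) ` A)"
    then have B: "B \<noteq> {}" "finite B" "B \<subseteq> (\<Union>a\<in>A. U a m)" "\<forall>a\<in>A. B \<inter> U a m \<noteq> {}"
      unfolding vbox_def by auto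
    have m: "U a m \<subseteq> U a n" if "a \<in> A" for a using mono[OF _ \<open>n \<le> m\<close>] that \<open>A \<subseteq> topspace X\<close> by blast
    have "B \<subseteq> (\<Union>a\<in>A. U a n)" using B(3) m by blast
    moreover have "\<forall>a\<in>A. B \<inter> U a n \<noteq> {}" using B(4) m by blast
    ultimately show "B \<in> vbox ((\<lambda>a. U a n) ` A)"
      unfolding vbox_def using B(1,2) by auto
  qed
  have "generate_topology_on (vietoris_fin_base X) W"
    using W unfolding fin_vietoris_def by (rule openin_topology_generated_by)
  then show ?thesis
  proof (induction rule: generate_topology_on.induct)
    case Empty
    then show ?case by simp
  next
    case (Int a b)
    show ?case
    proof (intro ballI impI)
      fix A assume A: "A \<in> a \<inter> b" "A \<in> topspace (fin_vietoris X)"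
      then have At: "A \<subseteq> topspace X" by (simp add: topspace_fv)
      obtain n1 where n1: "vbox ((\<lambda>a. U a n1) ` A) \<subseteq> a" using Int A by blast
      obtain n2 where n2: "vbox ((\<lambda>a. U a n2) ` A) \<subseteq> b" using Int A by blast
      have "vbox ((\<lambda>a. U a (max n1 n2)) ` A) \<subseteq> a \<inter> b"
        using vmono[OF At, of n1 "max n1 n2"] vmono[OF At, of n2 "max n1 n2"] n1 n2 by auto
      then show "\<exists>n. vbox ((\<lambda>a. U a n) ` A) \<subseteq> a \<inter> b" by blast
    qed
  next
    case (UN K)
    then show ?case by blast
  next
    case (Basis s)
    then obtain \<U> where U: "finite \<U>" "\<U> \<noteq> {}" "\<forall>U\<in>\<U>. openin X U"
      and s0: "s = {A. A \<noteq> {} \<and> finite A \<and> A \<subseteq> \<Union>\<U> \<and> (\<forall>U\<in>\<U>. A \<inter> U \<noteq> {})}"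
      unfolding vietoris_fin_base_def by blast
    have s: "s = vbox \<U>" unfolding s0 vbox_def ..
    show ?case
    proof (intro ballI impI)
      fix A assume A: "A \<in> s" "A \<in> topspace (fin_vietoris X)"
      then have At: "A \<subseteq> topspace X" "finite A" by (auto simp: topspace_fv)
      have As: "A \<subseteq> \<Union>\<U>" "\<forall>V\<in>\<U>. A \<inter> V \<noteq> {}" using A(1) unfolding s vbox_def by auto
      define P where "P = {(x, V). x \<in> A \<and> V \<in> \<U> \<and> x \<in> V}"
      have finP: "finite P" unfolding P_def
        by (rule finite_subset[of _ "A \<times> \<U>"]) (use At U in auto)
      have "\<exists>n. U (fst p) n \<subseteq> snd p" if pP: "p \<in> P" for p
      proof -
        obtain x V where p: "p = (x, V)" "x \<in> A" "V \<in> \<U>" "x \<in> V" using pP unfolding P_def by blast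
        have "x \<in> topspace X" using p At by blast
        moreover have "openin X V" using p U(3) by blast
        ultimately show ?thesis using lb p by auto
      qed
      then obtain N where N: "\<And>p. p \<in> P \<Longrightarrow> U (fst p) (N p) \<subseteq> snd p" by metis
      define n where "n = Max (insert 0 (N ` P))"
      have key: "U x n \<subseteq> V" if "x \<in> A" "V \<in> \<U>" "x \<in> V" for x V
      proof -
        have p: "(x, V) \<in> P" using that unfolding P_def by auto
        have "N (x, V) \<le> n" unfolding n_def using finP p by (intro Max_ge) auto
        moreover have "x \<in> topspace X" using At that(1) by blast
        ultimately have "U x n \<subseteq> U x (N (x, V))" using mono by blast
        also have "\<dots> \<subseteq> V" using N[OF p] by simp
        finally show ?thesis .
      qed
      have "vbox ((\<lambda>a. U a n) ` A) \<subseteq> vbox \<U>"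
      proof
        fix B assume "B \<in> vbox ((\<lambda>a. U a n) ` A)"
        then have B: "B \<noteq> {}" "finite B" "B \<subseteq> (\<Union>a\<in>A. U a n)" "\<forall>a\<in>A. B \<inter> U a n \<noteq> {}"
          unfolding vbox_def by auto
        have "B \<subseteq> \<Union>\<U>"
        proof
          fix b assume "b \<in> B"
          then obtain x where x: "x \<in> A" "b \<in> U x n" using B(3) by blast
          then obtain V where V: "V \<in> \<U>" "x \<in> V" using As by blast
          have "b \<in> V" using key[OF x(1) V] x(2) by blast
          then show "b \<in> \<Union>\<U>" using V(1) by blast
        qed
        moreover have "\<forall>V\<in>\<U>. B \<inter> V \<noteq> {}"
        proof
          fix V assume V: "V \<in> \<U>"
          obtain x where x: "x \<in> A" "x \<in> V" using As V by blast
          have "B \<inter> U x n \<noteq> {}" using B(4) x(1) by blast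
          then show "B \<inter> V \<noteq> {}" using key[OF x(1) V x(2)] by blast
        qed
        ultimately show "B \<in> vbox \<U>" using B(1,2) unfolding vbox_def by simp
      qed
      then show "\<exists>n. vbox ((\<lambda>a. U a n) ` A) \<subseteq> s" unfolding s by blast
    qed
  qed
qed

lemma vbox_img_iff:
  "B \<in> vbox (f ` A) \<longleftrightarrow> B \<noteq> {} \<and> finite B \<and> (\<forall>b\<in>B. \<exists>a\<in>A. b \<in> f a) \<and> (\<forall>a\<in>A. \<exists>b\<in>B. b \<in> f a)"
  unfolding vbox_def by blast

theorem theorem4p5:
  fixes X :: "'a topology"
  assumes "regular_space X" and "Hausdorff_space X"
  shows "nagata_space X \<longleftrightarrow> nagata_space (fin_vietoris X)"
proof
  assume "nagata_space X"
  then obtain U V :: "'a \<Rightarrow> nat \<Rightarrow> 'a set" where H: "\<forall>x\<in>topspace X.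
        (\<forall>n. openin X (U x n) \<and> x \<in> U x n \<and> openin X (V x n) \<and> x \<in> V x n) \<and>
        (\<forall>n. U x (Suc n) \<subseteq> U x n) \<and>
        (\<forall>W. openin X W \<and> x \<in> W \<longrightarrow> (\<exists>n. U x n \<subseteq> W)) \<and>
        (\<forall>n. \<forall>y\<in>topspace X. y \<notin> U x n \<longrightarrow> V x n \<inter> V y n = {})"
    unfolding nagata_space_def by (elim exE) (rule that)
  have Uo: "openin X (U x n)" and Ux: "x \<in> U x n" and Vo: "openin X (V x n)" and Vx: "x \<in> V x n"
    and Ud: "U x (Suc n) \<subseteq> U x n" if "x \<in> topspace X" for x n
    using bspec[OF H that(1)] by auto
  have Ulb: "\<exists>n. U x n \<subseteq> W" if "x \<in> topspace X" "openin X W" "x \<in> W" for x W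
    using bspec[OF H that(1)] that(2,3) by auto
  have Vd: "V x n \<inter> V y n = {}" if "x \<in> topspace X" "y \<in> topspace X" "y \<notin> U x n" for x y n
    using bspec[OF H that(1)] that(2,3) by auto
  define UF where "UF A n = vbox ((\<lambda>a. U a n) ` A)" for A :: "'a set" and n
  define VF where "VF A n = vbox ((\<lambda>a. V a n) ` A)" for A :: "'a set" and n
  show "nagata_space (fin_vietoris X)"
    unfolding nagata_space_def
  proof (rule exI[of _ UF], rule exI[of _ VF], intro ballI conjI allI impI)
    fix A n assume A: "A \<in> topspace (fin_vietoris X)"
    then have At: "A \<noteq> {}" "finite A" "A \<subseteq> topspace X" by (auto simp: topspace_fv)
    show "openin (fin_vietoris X) (UF A n)" unfolding UF_def
      using At Uo by (intro base_open) auto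
    show "openin (fin_vietoris X) (VF A n)" unfolding VF_def
      using At Vo by (intro base_open) auto
    have "\<forall>a\<in>A. a \<in> U a n" "\<forall>a\<in>A. a \<in> V a n" using At Ux Vx by auto
    then show "A \<in> UF A n" "A \<in> VF A n" unfolding UF_def VF_def vbox_img_iff using At(1,2) by auto
    have "\<forall>a\<in>A. U a (Suc n) \<subseteq> U a n" using At Ud by auto
    then show "UF A (Suc n) \<subseteq> UF A n" unfolding UF_def subset_iff vbox_img_iff by blast
  next
    fix A W assume A: "A \<in> topspace (fin_vietoris X)" and W: "openin (fin_vietoris X) W \<and> A \<in> W"
    have "\<forall>A\<in>W. A \<in> topspace (fin_vietoris X) \<longrightarrow> (\<exists>n. vbox ((\<lambda>a. U a n) ` A) \<subseteq> W)"
      by (rule local_base_F[of X U]) (use Ud Ulb W in auto)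
    then show "\<exists>n. UF A n \<subseteq> W" unfolding UF_def using A W by blast
  next
    fix A n B assume A: "A \<in> topspace (fin_vietoris X)" and B: "B \<in> topspace (fin_vietoris X)"
      and nB: "B \<notin> UF A n"
    have At: "A \<noteq> {}" "finite A" "A \<subseteq> topspace X" using A by (auto simp: topspace_fv)
    have Bt: "B \<noteq> {}" "finite B" "B \<subseteq> topspace X" using B by (auto simp: topspace_fv)
    have dis: "V a n \<inter> V b n = {}" if "a \<in> A" "b \<in> B" "b \<notin> U a n" for a b
      using Vd that At Bt by blast
    from nB have "(\<exists>b\<in>B. \<forall>a\<in>A. b \<notin> U a n) \<or> (\<exists>a\<in>A. \<forall>b\<in>B. b \<notin> U a n)"
      unfolding UF_def vbox_img_iff using Bt(1,2) by auto
    then show "VF A n \<inter> VF B n = {}"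
    proof
      assume "\<exists>b\<in>B. \<forall>a\<in>A. b \<notin> U a n"
      then obtain b where b: "b \<in> B" "\<forall>a\<in>A. b \<notin> U a n" by blast
      show ?thesis
      proof (rule ccontr)
        assume "VF A n \<inter> VF B n \<noteq> {}"
        then obtain C where C: "C \<in> VF A n" "C \<in> VF B n" by blast
        then obtain c where c: "c \<in> C" "c \<in> V b n" using b(1) unfolding VF_def vbox_img_iff by blast
        then obtain a where a: "a \<in> A" "c \<in> V a n" using C(1) unfolding VF_def vbox_img_iff by blast
        show False using dis[OF a(1) b(1)] b(2) a c by blast
      qed
    next
      assume "\<exists>a\<in>A. \<forall>b\<in>B. b \<notin> U a n"
      then obtain a where a: "a \<in> A" "\<forall>b\<in>B. b \<notin> U a n" by blast
      show ?thesis
      proof (rule ccontr)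
        assume "VF A n \<inter> VF B n \<noteq> {}"
        then obtain C where C: "C \<in> VF A n" "C \<in> VF B n" by blast
        then obtain c where c: "c \<in> C" "c \<in> V a n" using a(1) unfolding VF_def vbox_img_iff by blast
        then obtain b where b: "b \<in> B" "c \<in> V b n" using C(2) unfolding VF_def vbox_img_iff by blast
        show False using dis[OF a(1) b(1)] a(2) b c by blast
      qed
    qed
  qed
next
  assume "nagata_space (fin_vietoris X)"
  then obtain U V :: "'a set \<Rightarrow> nat \<Rightarrow> 'a set set" where H: "\<forall>x\<in>topspace (fin_vietoris X).
        (\<forall>n. openin (fin_vietoris X) (U x n) \<and> x \<in> U x n \<and> openin (fin_vietoris X) (V x n) \<and> x \<in> V x n) \<and>
        (\<forall>n. U x (Suc n) \<subseteq> U x n) \<and>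
        (\<forall>W. openin (fin_vietoris X) W \<and> x \<in> W \<longrightarrow> (\<exists>n. U x n \<subseteq> W)) \<and>
        (\<forall>n. \<forall>y\<in>topspace (fin_vietoris X). y \<notin> U x n \<longrightarrow> V x n \<inter> V y n = {})"
    unfolding nagata_space_def by (elim exE) (rule that)
  define UX where "UX x n = {y \<in> topspace X. {y} \<in> U {x} n}" for x n
  define VX where "VX x n = {y \<in> topspace X. {y} \<in> V {x} n}" for x n
  have sing: "{x} \<in> topspace (fin_vietoris X)" if "x \<in> topspace X" for x
    using that by (simp add: topspace_fv)
  have FUo: "openin (fin_vietoris X) (U A n)" and FUx: "A \<in> U A n"
    and FVx: "A \<in> V A n" and FVo: "openin (fin_vietoris X) (V A n)"
    and FUd: "U A (Suc n) \<subseteq> U A n" if "A \<in> topspace (fin_vietoris X)" for A n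
    using bspec[OF H that(1)] by auto
  have FUlb: "\<exists>n. U A n \<subseteq> W" if "A \<in> topspace (fin_vietoris X)" "openin (fin_vietoris X) W" "A \<in> W" for A W
    using bspec[OF H that(1)] that(2,3) by auto
  have FVd: "V A n \<inter> V B n = {}" if "A \<in> topspace (fin_vietoris X)" "B \<in> topspace (fin_vietoris X)" "B \<notin> U A n" for A B n
    using bspec[OF H that(1)] that(2,3) by auto
  show "nagata_space X"
    unfolding nagata_space_def
  proof (rule exI[of _ UX], rule exI[of _ VX], intro ballI conjI allI impI)
    fix x n assume x: "x \<in> topspace X"
    show "openin X (UX x n)" unfolding UX_def using FUo[OF sing[OF x]] by (intro sing_open)
    show "openin X (VX x n)" unfolding VX_def using FVo[OF sing[OF x]] by (intro sing_open)
    show "x \<in> UX x n" unfolding UX_def using FUx[OF sing[OF x]] x by auto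
    show "x \<in> VX x n" unfolding VX_def using FVx[OF sing[OF x]] x by auto
    show "UX x (Suc n) \<subseteq> UX x n" unfolding UX_def using FUd[OF sing[OF x]] by auto
  next
    fix x W assume x: "x \<in> topspace X" and W: "openin X W \<and> x \<in> W"
    have o: "openin (fin_vietoris X) (vbox {W})" using W by (intro base_open) auto
    have "{x} \<in> vbox {W}" using W unfolding vbox_def by auto
    then obtain n where n: "U {x} n \<subseteq> vbox {W}" using FUlb[OF sing[OF x] o] by blast
    have "UX x n \<subseteq> W" unfolding UX_def using n unfolding vbox_def by auto
    then show "\<exists>n. UX x n \<subseteq> W" by blast
  next
    fix x n y assume x: "x \<in> topspace X" and y: "y \<in> topspace X" and ny: "y \<notin> UX x n"
    have "{y} \<notin> U {x} n" using ny y unfolding UX_def by auto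
    then have "V {x} n \<inter> V {y} n = {}" using FVd sing[OF x] sing[OF y] by blast
    then show "VX x n \<inter> VX y n = {}" unfolding VX_def by auto
  qed
qed

end
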